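(* Let $(\mathfrak{g}_\sigma,\mathfrak{q})$ be a reductive $CR$-algebra with invariant complement $\mathfrak{q}^c$. Then every element $Z\in\sigma(\mathfrak{q})\setminus\mathfrak{q}$ of finite Levi-order admits a Levi-sequence of minimal length all of whose elements belong to $\mathfrak{q}\cap\sigma(\mathfrak{q}^c)$.
   Context: $\mathfrak{g}$ is a finite-dimensional complex Lie algebra, $\sigma$ an anti-$\mathbb{C}$-linear involution, $\mathfrak{g}_\sigma$ its fixed points; $(\mathfrak{g}_\sigma,\mathfrak{q})$ with $\mathfrak{q}$ a complex subalgebra of $\mathfrak{g}$ is a $CR$-algebra. It is reductive if there is a $\mathbb{C}$-linear complement $\mathfrak{q}^c$ of $\mathfrak{q}$ in $\mathfrak{g}$ (an invariant complement) with $[\mathfrak{q}\cap\sigma(\mathfrak{q}),\mathfrak{q}^c]\subseteq\mathfrak{q}^c$ and $\mathfrak{g}=(\mathfrak{q}\cap\sigma(\mathfrak{q}))\oplus(\mathfrak{q}\cap\sigma(\mathfrak{q}^c))\oplus(\mathfrak{q}^c\cap\sigma(\mathfrak{q}))\oplus(\mathfrak{q}^c\cap\sigma(\mathfrak{q}^c))$. Higher order commutators: $[X_1,\dots,X_h]=[[X_1,\dots,X_{h-1}],X_h]$. For $Z\in\sigma(\mathfrak{q})\setminus\mathfrak{q}$, a Levi-sequence is $(Z_1,\dots,Z_k)$ in $\mathfrak{q}$ with $[Z,Z_1,\dots,Z_k]\notin\mathfrak{q}+\sigma(\mathfrak{q})$; the Levi-order of $Z$ is the minimal length of a Levi-sequence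 ($+\infty$ if none exists). *)

theory Defs
  imports "HOL-Analysis.Analysis" "HOL-Library.Extended_Nat"
begin

definition complex_lie_algebra ::
  "(complex \<Rightarrow> 'g::ab_group_add \<Rightarrow> 'g) \<Rightarrow> ('g \<Rightarrow> 'g \<Rightarrow> 'g) \<Rightarrow> bool" where
  "complex_lie_algebra smul br \<longleftrightarrow>
     vector_space smul \<and>
     (\<exists>B. finite B \<and> module.span smul B = UNIV) \<and>
     (\<forall>x y z. br (x + y) z = br x z + br y z) \<and>
     (\<forall>x y z. br x (y + z) = br x y + br x z) \<and>
     (\<forall>c x y. br (smul c x) y = smul c (br x y)) \<and>
     (\<forall>c x y. br x (smul c y) = smul c (br x y)) \<and>
     (\<forall>x. br x x = 0) \<and>
     (\<forall>x y z. br x (br y z) + br y (br z x) + br z (br x y) = 0)"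

text \<open>Anti-C-linear involution of the Lie algebra (a conjugation, i.e. also
compatible with the bracket, so that its fixed points form a real form).\<close>

definition anti_linear_involution ::
  "(complex \<Rightarrow> 'g::ab_group_add \<Rightarrow> 'g) \<Rightarrow> ('g \<Rightarrow> 'g \<Rightarrow> 'g) \<Rightarrow> ('g \<Rightarrow> 'g) \<Rightarrow> bool" where
  "anti_linear_involution smul br \<sigma> \<longleftrightarrow>
     (\<forall>x y. \<sigma> (x + y) = \<sigma> x + \<sigma> y) \<and>
     (\<forall>c x. \<sigma> (smul c x) = smul (cnj c) (\<sigma> x)) \<and>
     (\<forall>x. \<sigma> (\<sigma> x) = x) \<and>
     (\<forall>x y. \<sigma> (br x y) = br (\<sigma> x) (\<sigma> y))"

definition complex_subalgebra ::
  "(complex \<Rightarrow> 'g::ab_group_add \<Rightarrow> 'g) \<Rightarrow> ('g \<Rightarrow> 'g \<Rightarrow> 'g) \<Rightarrow> 'g set \<Rightarrow> bool" where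
  "complex_subalgebra smul br q \<longleftrightarrow>
     module.subspace smul q \<and> (\<forall>x\<in>q. \<forall>y\<in>q. br x y \<in> q)"

definition setsum2 :: "'g::ab_group_add set \<Rightarrow> 'g set \<Rightarrow> 'g set" where
  "setsum2 A B = {a + b | a b. a \<in> A \<and> b \<in> B}"

definition direct_sum4 :: "'g::ab_group_add set \<Rightarrow> 'g set \<Rightarrow> 'g set \<Rightarrow> 'g set \<Rightarrow> bool" where
  "direct_sum4 A B C D \<longleftrightarrow>
     (\<forall>x. \<exists>!(a, b, c, d). a \<in> A \<and> b \<in> B \<and> c \<in> C \<and> d \<in> D \<and> x = a + b + c + d)"

definition invariant_complement ::
  "(complex \<Rightarrow> 'g::ab_group_add \<Rightarrow> 'g) \<Rightarrow> ('g \<Rightarrow> 'g \<Rightarrow> 'g) \<Rightarrow> ('g \<Rightarrow> 'g)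
     \<Rightarrow> 'g set \<Rightarrow> 'g set \<Rightarrow> bool" where
  "invariant_complement smul br \<sigma> q qc \<longleftrightarrow>
     module.subspace smul qc \<and> q \<inter> qc = {0} \<and> setsum2 q qc = UNIV \<and>
     (\<forall>x\<in>q \<inter> \<sigma> ` q. \<forall>y\<in>qc. br x y \<in> qc) \<and>
     direct_sum4 (q \<inter> \<sigma> ` q) (q \<inter> \<sigma> ` qc) (qc \<inter> \<sigma> ` q) (qc \<inter> \<sigma> ` qc)"

definition hcomm :: "('g \<Rightarrow> 'g \<Rightarrow> 'g) \<Rightarrow> 'g \<Rightarrow> 'g list \<Rightarrow> 'g" where
  "hcomm br Z zs = foldl br Z zs"

definition levi_sequence ::
  "('g::ab_group_add \<Rightarrow> 'g \<Rightarrow> 'g) \<Rightarrow> ('g \<Rightarrow> 'g) \<Rightarrow> 'g set \<Rightarrow> 'g \<Rightarrow> 'g list \<Rightarrow> bool" where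
  "levi_sequence br \<sigma> q Z zs \<longleftrightarrow>
     set zs \<subseteq> q \<and> hcomm br Z zs \<notin> setsum2 q (\<sigma> ` q)"

definition levi_order ::
  "('g::ab_group_add \<Rightarrow> 'g \<Rightarrow> 'g) \<Rightarrow> ('g \<Rightarrow> 'g) \<Rightarrow> 'g set \<Rightarrow> 'g \<Rightarrow> enat" where
  "levi_order br \<sigma> q Z =
     (if \<exists>zs. levi_sequence br \<sigma> q Z zs
      then enat (LEAST n. \<exists>zs. levi_sequence br \<sigma> q Z zs \<and> length zs = n)
      else \<infinity>)"

end

theory Submission
  imports Defs
begin

lemma hcomm_Cons: "hcomm br Z (x # xs) = hcomm br (br Z x) xs"
  by (simp add: hcomm_def)

lemma hcomm_append: "hcomm br Z (xs @ ys) = hcomm br (hcomm br Z xs) ys"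
  by (simp add: hcomm_def)

lemma hcomm_add:
  assumes "\<forall>x y z. br (x + y) z = br x z + br y z"
  shows "hcomm br (u + v) ys = hcomm br u ys + hcomm br v ys"
  using assms by (induction ys arbitrary: u v) (auto simp: hcomm_def)

lemma br_jacobi2:
  fixes br :: "'g::ab_group_add \<Rightarrow> 'g \<Rightarrow> 'g"
  assumes ladd: "\<forall>x y z. br (x + y) z = br x z + br y z"
    and radd: "\<forall>x y z. br x (y + z) = br x y + br x z"
    and alt: "\<forall>x. br x x = 0"
    and jac: "\<forall>x y z. br x (br y z) + br y (br z x) + br z (br x y) = 0"
  shows "br (br W A) y = br (br W y) A + br W (br A y)"
proof -
  have anti: "br a b = - br b a" for a b
  proof -
    have "0 = br (a + b) (a + b)" using alt by simp
    also have "\<dots> = br a a + br a b + (br b a + br b b)" using ladd radd by simp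
    finally show ?thesis using alt by (simp add: eq_neg_iff_add_eq_0 add.commute)
  qed
  have l0: "br 0 b = 0" for b using ladd[rule_format, of 0 0 b] by simp
  have lneg: "br (- a) b = - br a b" for a b
    using ladd[rule_format, of "- a" a b] l0[of b] by (simp add: eq_neg_iff_add_eq_0)
  have "br y (br W A) + br W (br A y) + br A (br y W) = 0" using jac by simp
  then have h1: "br y (br W A) = - (br W (br A y) + br A (br y W))"
    by (metis add.assoc add.commute neg_eq_iff_add_eq_0)
  then have "br (br W A) y = br W (br A y) + br A (br y W)"
    using anti[of "br W A" y] by simp
  also have "br A (br y W) = br (br W y) A"
    using anti[of A "br y W"] anti[of y W] anti[of "br W y" A] lneg by simp
  finally show ?thesis by (simp add: add.commute)
qed

theorem lemma3p10:
  fixes smul :: "complex \<Rightarrow> 'g::ab_group_add \<Rightarrow> 'g"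
    and br :: "'g \<Rightarrow> 'g \<Rightarrow> 'g"
    and \<sigma> :: "'g \<Rightarrow> 'g"
    and q qc :: "'g set"
    and Z :: 'g
  assumes "complex_lie_algebra smul br"
    and "anti_linear_involution smul br \<sigma>"
    and "complex_subalgebra smul br q"
    and "invariant_complement smul br \<sigma> q qc"
    and "Z \<in> \<sigma> ` q - q"
    and "levi_order br \<sigma> q Z \<noteq> \<infinity>"
  shows "\<exists>zs. levi_sequence br \<sigma> q Z zs \<and> enat (length zs) = levi_order br \<sigma> q Z
             \<and> set zs \<subseteq> q \<inter> \<sigma> ` qc"
proof -
  note LA = assms(1)[unfolded complex_lie_algebra_def]
  have vs: "vector_space smul" using LA by blast
  have ladd: "\<forall>x y z. br (x + y) z = br x z + br y z"
    and radd: "\<forall>x y z. br x (y + z) = br x y + br x z"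
    and alt: "\<forall>x. br x x = 0"
    and jac: "\<forall>x y z. br x (br y z) + br y (br z x) + br z (br x y) = 0"
    using LA by blast+
  note SI = assms(2)[unfolded anti_linear_involution_def]
  have sadd: "\<And>x y. \<sigma> (x + y) = \<sigma> x + \<sigma> y" and sinv: "\<And>x. \<sigma> (\<sigma> x) = x"
    and sbr: "\<And>x y. \<sigma> (br x y) = br (\<sigma> x) (\<sigma> y)" using SI by blast+
  have s0: "\<sigma> 0 = 0" using sadd[of 0 0] by simp
  have qsub: "module.subspace smul q" and qbr: "\<And>x y. x \<in> q \<Longrightarrow> y \<in> q \<Longrightarrow> br x y \<in> q"
    using assms(3) unfolding complex_subalgebra_def by blast+
  note IC = assms(4)[unfolded invariant_complement_def]
  have qcsub: "module.subspace smul qc" and qqc: "q \<inter> qc = {0}"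
    and ds: "direct_sum4 (q \<inter> \<sigma> ` q) (q \<inter> \<sigma> ` qc) (qc \<inter> \<sigma> ` q) (qc \<inter> \<sigma> ` qc)"
    using IC by blast+
  interpret vector_space smul by (rule vs)
  have q0: "0 \<in> q" using qsub subspace_0 by blast
  have qc0: "0 \<in> qc" using qcsub subspace_0 by blast
  have qadd: "x \<in> q \<Longrightarrow> y \<in> q \<Longrightarrow> x + y \<in> q" for x y
    using qsub subspace_add by blast
  have qdiff: "x \<in> q \<Longrightarrow> y \<in> q \<Longrightarrow> x - y \<in> q" for x y
    using qsub subspace_diff by blast
  have qcadd: "x \<in> qc \<Longrightarrow> y \<in> qc \<Longrightarrow> x + y \<in> qc" for x y
    using qcsub subspace_add by blast
  have decomp: "\<exists>a b. a \<in> q \<inter> \<sigma> ` q \<and> b \<in> q \<inter> \<sigma> ` qc \<and> y = a + b" if "y \<in> q" for y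
  proof -
    obtain a b c d where abcd: "a \<in> q \<inter> \<sigma> ` q" "b \<in> q \<inter> \<sigma> ` qc" "c \<in> qc \<inter> \<sigma> ` q"
        "d \<in> qc \<inter> \<sigma> ` qc" "y = a + b + c + d"
    proof -
      from ds have "\<exists>!(a, b, c, d). a \<in> q \<inter> \<sigma> ` q \<and> b \<in> q \<inter> \<sigma> ` qc \<and> c \<in> qc \<inter> \<sigma> ` q
          \<and> d \<in> qc \<inter> \<sigma> ` qc \<and> y = a + b + c + d"
        unfolding direct_sum4_def by (rule spec)
      then obtain p where "case p of (a, b, c, d) \<Rightarrow> a \<in> q \<inter> \<sigma> ` q \<and> b \<in> q \<inter> \<sigma> ` qc \<and> c \<in> qc \<inter> \<sigma> ` q
          \<and> d \<in> qc \<inter> \<sigma> ` qc \<and> y = a + b + c + d" by (rule ex1E) auto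
      moreover obtain a b c d where "p = (a, b, c, d)" by (cases p)
      ultimately have "a \<in> q \<inter> \<sigma> ` q \<and> b \<in> q \<inter> \<sigma> ` qc \<and> c \<in> qc \<inter> \<sigma> ` q
          \<and> d \<in> qc \<inter> \<sigma> ` qc \<and> y = a + b + c + d" by (simp only: prod.case)
      then show ?thesis using that by blast
    qed
    have "c + d = y - (a + b)" using abcd(5) by (simp add: algebra_simps)
    moreover have "y - (a + b) \<in> q" using qdiff[OF that qadd[of a b]] abcd(1,2) by blast
    ultimately have "c + d \<in> q" by simp
    moreover have "c + d \<in> qc" using qcadd abcd by blast
    ultimately have cd0: "c + d = 0" using qqc by blast
    have z1: "(0::'g, 0::'g, 0::'g, 0::'g) = (0, 0, c, d)"
    proof -
      have m0: "(0::'g) \<in> q \<inter> \<sigma> ` q" "(0::'g) \<in> q \<inter> \<sigma> ` qc"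
        "(0::'g) \<in> qc \<inter> \<sigma> ` q" "(0::'g) \<in> qc \<inter> \<sigma> ` qc"
        using q0 qc0 s0 by (auto intro!: image_eqI[where x=0])
      define P where "P = (\<lambda>(a, b, c, d). a \<in> q \<inter> \<sigma> ` q \<and> b \<in> q \<inter> \<sigma> ` qc \<and> c \<in> qc \<inter> \<sigma> ` q
          \<and> d \<in> qc \<inter> \<sigma> ` qc \<and> (0::'g) = a + b + c + d)"
      have E: "\<exists>!p. P p" using ds unfolding direct_sum4_def P_def by (rule spec)
      have P1: "P (0, 0, 0, 0)" using m0 unfolding P_def by simp
      have P2: "P (0, 0, c, d)" using m0 abcd(3,4) cd0 unfolding P_def by (simp add: add.assoc)
      show ?thesis using E P1 P2 by blast
    qed
    then have "c = 0" "d = 0" by auto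
    then show ?thesis using abcd by auto
  qed
  define S where "S = setsum2 q (\<sigma> ` q)"
  have Sadd: "x \<in> S \<Longrightarrow> y \<in> S \<Longrightarrow> x + y \<in> S" for x y
  proof -
    assume "x \<in> S" "y \<in> S"
    then obtain u1 v1 u2 v2 where "u1 \<in> q" "v1 \<in> q" "u2 \<in> q" "v2 \<in> q"
      "x = u1 + \<sigma> v1" "y = u2 + \<sigma> v2" unfolding S_def setsum2_def by blast
    then have "x + y = (u1 + u2) + \<sigma> (v1 + v2)" "u1 + u2 \<in> q" "v1 + v2 \<in> q"
      using qadd sadd by (auto simp: algebra_simps)
    then show "x + y \<in> S" unfolding S_def setsum2_def by blast
  qed
  have Sad: "br x A \<in> S" if xS: "x \<in> S" and AQ: "A \<in> q \<inter> \<sigma> ` q" for x A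
  proof -
    obtain u v where uv: "u \<in> q" "v \<in> q" "x = u + \<sigma> v"
      using xS unfolding S_def setsum2_def by blast
    obtain A' where A': "A' \<in> q" "A = \<sigma> A'" using AQ by blast
    have "br x A = br u A + \<sigma> (br v A')" using uv A' ladd sbr sinv by simp
    moreover have "br u A \<in> q" "br v A' \<in> q" using qbr uv A' AQ by auto
    ultimately show ?thesis unfolding S_def setsum2_def by blast
  qed
  have ex: "\<exists>zs. levi_sequence br \<sigma> q Z zs"
    using assms(6) unfolding levi_order_def by (auto split: if_splits)
  define n where "n = (LEAST n. \<exists>zs. levi_sequence br \<sigma> q Z zs \<and> length zs = n)"
  have lo: "levi_order br \<sigma> q Z = enat n" using ex unfolding levi_order_def n_def by simp
  obtain zs0 where zs0: "levi_sequence br \<sigma> q Z zs0" "length zs0 = n"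
    using ex LeastI_ex[of "\<lambda>n. \<exists>zs. levi_sequence br \<sigma> q Z zs \<and> length zs = n"]
    unfolding n_def by blast
  have minl: "hcomm br Z ys \<in> S" if "set ys \<subseteq> q" "length ys < n" for ys
  proof (rule ccontr)
    assume "hcomm br Z ys \<notin> S"
    then have "levi_sequence br \<sigma> q Z ys" using that unfolding levi_sequence_def S_def by blast
    then have "n \<le> length ys" unfolding n_def by (auto intro: Least_le)
    then show False using that by simp
  qed
  have key: "hcomm br (br (hcomm br Z xs) A) ys \<in> S"
    if "set ys \<subseteq> q" "A \<in> q \<inter> \<sigma> ` q" "set xs \<subseteq> q" "length xs + 1 + length ys = n"
    for ys xs A
    using that
  proof (induction ys arbitrary: xs)
    case Nil
    have "length xs < n" using Nil.prems(4) by simp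
    then have "hcomm br Z xs \<in> S" using minl Nil.prems(3) by blast
    then have "br (hcomm br Z xs) A \<in> S" using Sad Nil.prems(2) by blast
    then show ?case by (simp add: hcomm_def)
  next
    case (Cons y ys)
    have "hcomm br (br (hcomm br Z xs) A) (y # ys)
        = hcomm br (br (br (hcomm br Z xs) y) A + br (hcomm br Z xs) (br A y)) ys"
      unfolding hcomm_Cons br_jacobi2[OF ladd radd alt jac, of "hcomm br Z xs" A y] ..
    also have "\<dots> = hcomm br (br (hcomm br Z (xs @ [y])) A) ys
                    + hcomm br Z (xs @ [br A y] @ ys)"
      using hcomm_add[OF ladd] by (simp add: hcomm_append hcomm_def)
    also have "\<dots> \<in> S"
    proof (rule Sadd)
      show "hcomm br (br (hcomm br Z (xs @ [y])) A) ys \<in> S"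
        using Cons by simp
      have "br A y \<in> q" using qbr Cons.prems by auto
      then show "hcomm br Z (xs @ [br A y] @ ys) \<in> S"
        using Cons by (intro minl) auto
    qed
    finally show ?case .
  qed
  have repl: "\<exists>zs. length zs = n \<and> set zs \<subseteq> q \<inter> \<sigma> ` qc \<and> hcomm br Z zs \<notin> S"
    if "set ys \<subseteq> q" "set xs \<subseteq> q \<inter> \<sigma> ` qc" "length (xs @ ys) = n"
      "hcomm br Z (xs @ ys) \<notin> S" for ys xs
    using that
  proof (induction ys arbitrary: xs)
    case Nil
    then show ?case by auto
  next
    case (Cons y ys)
    obtain a b where ab: "a \<in> q \<inter> \<sigma> ` q" "b \<in> q \<inter> \<sigma> ` qc" "y = a + b"
      using decomp[of y] Cons.prems(1) by auto
    have e: "hcomm br Z (xs @ y # ys) = hcomm br (br (hcomm br Z xs) a) ys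
        + hcomm br Z ((xs @ [b]) @ ys)"
      using ab(3) radd hcomm_add[OF ladd] by (simp add: hcomm_append hcomm_def)
    have "hcomm br (br (hcomm br Z xs) a) ys \<in> S"
      using key[of ys a xs] Cons.prems ab by auto
    then have nb: "hcomm br Z ((xs @ [b]) @ ys) \<notin> S"
      using Cons.prems(4) Sadd e by force
    show ?case
    proof (rule Cons.IH)
      show "set ys \<subseteq> q" using Cons.prems(1) by simp
      show "set (xs @ [b]) \<subseteq> q \<inter> \<sigma> ` qc" using Cons.prems(2) ab(2) by simp
      show "length ((xs @ [b]) @ ys) = n" using Cons.prems(3) by simp
      show "hcomm br Z ((xs @ [b]) @ ys) \<notin> S" by (rule nb)
    qed
  qed
  obtain zs where zs: "length zs = n" "set zs \<subseteq> q \<inter> \<sigma> ` qc" "hcomm br Z zs \<notin> S"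
    using repl[of zs0 "[]"] zs0 unfolding levi_sequence_def S_def by auto
  then show ?thesis using lo unfolding levi_sequence_def S_def by auto
qed

end
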